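(* Let $\Sigma\in\mathcal{G}_n$ and $Q\in\mathcal{Q}(\Sigma)$ with level $\ell$, and let $p$ be a prime divisor of $\ell$. Then there exists an integral vector $z\not\equiv 0\pmod p$ such that $W(\Sigma)^{\rm T}z\equiv 0\pmod p$.
   Context: An oriented graph on vertices $v_1,\dots,v_n$ is a simple graph with each edge directed; its skew-adjacency matrix $S(\Sigma)=(s_{ij})$ has $s_{ij}=1$ if $(v_i,v_j)$ is an arc, $-1$ if $(v_j,v_i)$ is an arc, $0$ otherwise. Two oriented graphs are generalized cospectral if their skew-adjacency matrices $S$ have the same spectrum and the matrices $J-I-S$ have the same spectrum. With $e$ the all-one vector, $W(\Sigma)=[e,Se,\dots,S^{n-1}e]$, $S=S(\Sigma)$. $\mathcal{G}_n$ is the set of $n$-vertex oriented graphs with $2^{-\lfloor n/2\rfloor}\det W(\Sigma)$ an odd square-free integer. A rational orthogonal matrix $Q$ is regular if $Qe=e$; its level is the least positive integer $k$ with $kQ$ integral. $\mathcal{Q}(\Sigma)$ is the set of regular rational orthogonal $Q$ with $Q^{\rm T}S(\Sigma)Q=S(\Delta)$ for some oriented graph $\Delta$ generalized cospectral with $\Sigma$. *)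

theory Defs
  imports "Jordan_Normal_Form.Char_Poly" "HOL-Computational_Algebra.Squarefree"
begin

text \<open>An oriented graph on vertices 0..<n, given by its arc relation:
  A i j means (v_i, v_j) is an arc. Simple: no loops, at most one direction per pair.\<close>
definition oriented_graph :: "nat \<Rightarrow> (nat \<Rightarrow> nat \<Rightarrow> bool) \<Rightarrow> bool" where
  "oriented_graph n A \<longleftrightarrow> (\<forall>i j. A i j \<longrightarrow> i < n \<and> j < n \<and> i \<noteq> j \<and> \<not> A j i)"

definition skew_adj :: "nat \<Rightarrow> (nat \<Rightarrow> nat \<Rightarrow> bool) \<Rightarrow> int mat" where
  "skew_adj n A = mat n n (\<lambda>(i,j). if A i j then 1 else if A j i then -1 else 0)"

definition ones_vec :: "nat \<Rightarrow> 'a :: one vec" where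
  "ones_vec n = vec n (\<lambda>_. 1)"

definition all_ones_mat :: "nat \<Rightarrow> 'a :: one mat" where
  "all_ones_mat n = mat n n (\<lambda>_. 1)"

text \<open>Same spectrum = same characteristic polynomial.\<close>
definition gen_cospectral :: "nat \<Rightarrow> (nat \<Rightarrow> nat \<Rightarrow> bool) \<Rightarrow> (nat \<Rightarrow> nat \<Rightarrow> bool) \<Rightarrow> bool" where
  "gen_cospectral n A B \<longleftrightarrow>
     char_poly (skew_adj n A) = char_poly (skew_adj n B) \<and>
     char_poly (all_ones_mat n - 1\<^sub>m n - skew_adj n A) =
     char_poly (all_ones_mat n - 1\<^sub>m n - skew_adj n B)"

definition walk_mat :: "nat \<Rightarrow> (nat \<Rightarrow> nat \<Rightarrow> bool) \<Rightarrow> int mat" where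
  "walk_mat n A = mat n n (\<lambda>(i,j). ((skew_adj n A ^\<^sub>m j) *\<^sub>v ones_vec n) $ i)"

definition in_G :: "nat \<Rightarrow> (nat \<Rightarrow> nat \<Rightarrow> bool) \<Rightarrow> bool" where
  "in_G n A \<longleftrightarrow> oriented_graph n A \<and>
     (\<exists>m::int. det (walk_mat n A) = 2 ^ (n div 2) * m \<and> odd m \<and> squarefree m)"

definition regular_rat_orth :: "nat \<Rightarrow> rat mat \<Rightarrow> bool" where
  "regular_rat_orth n Q \<longleftrightarrow> Q \<in> carrier_mat n n \<and> Q\<^sup>T * Q = 1\<^sub>m n \<and>
     Q *\<^sub>v ones_vec n = ones_vec n"

definition level :: "nat \<Rightarrow> rat mat \<Rightarrow> nat" where
  "level n Q = (LEAST k::nat. k > 0 \<and> (\<forall>i<n. \<forall>j<n. of_nat k * Q $$ (i,j) \<in> \<int>))"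

definition Qset :: "nat \<Rightarrow> (nat \<Rightarrow> nat \<Rightarrow> bool) \<Rightarrow> rat mat set" where
  "Qset n A = {Q. regular_rat_orth n Q \<and>
     (\<exists>B. oriented_graph n B \<and> gen_cospectral n A B \<and>
          Q\<^sup>T * map_mat of_int (skew_adj n A) * Q = map_mat of_int (skew_adj n B))}"

end

theory Submission
  imports Defs
begin
lemma denom_int: fixes q :: rat shows "of_int (snd (quotient_of q)) * q \<in> \<int>" "snd (quotient_of q) > 0"
proof -
  obtain a b where ab: "quotient_of q = (a,b)" by (cases "quotient_of q")
  have "b > 0" using quotient_of_denom_pos[OF ab] .
  moreover have "q = of_int a / of_int b" using quotient_of_div[OF ab] .
  ultimately show "of_int (snd (quotient_of q)) * q \<in> \<int>" "snd (quotient_of q) > 0" using ab by auto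
qed

lemma level_exists: fixes Q :: "rat mat" shows "\<exists>k::nat. k > 0 \<and> (\<forall>i<n. \<forall>j<n. of_nat k * Q $$ (i,j) \<in> \<int>)"
proof -
  define d where "d = (\<lambda>x. nat (snd (quotient_of (Q $$ x))))"
  define k where "k = (\<Prod>x\<in>{..<n}\<times>{..<n}. d x)"
  have dpos: "d x > 0" for x using denom_int(2) unfolding d_def by auto
  have "k > 0" unfolding k_def using dpos by (simp add: prod_pos)
  moreover have "of_nat k * Q $$ (i,j) \<in> \<int>" if "i < n" "j < n" for i j
  proof -
    have "d (i,j) dvd k" unfolding k_def by (rule dvd_prodI) (use that in auto)
    then obtain c where c: "k = d (i,j) * c" by auto
    have "of_nat (d (i,j)) * Q $$ (i,j) \<in> \<int>" unfolding d_def
      using denom_int[of "Q $$ (i,j)"] by simp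
    then have "of_nat c * (of_nat (d (i,j)) * Q $$ (i,j)) \<in> \<int>" by simp
    then show ?thesis unfolding c by (simp add: algebra_simps)
  qed
  ultimately show ?thesis by blast
qed

lemma walk_entry:
  assumes "i < n" "k < n"
  shows "rat_of_int (walk_mat n B $$ (i,k)) = ((map_mat of_int (skew_adj n B)) ^\<^sub>m k *\<^sub>v ones_vec n) $ i"
proof -
  have S: "skew_adj n B \<in> carrier_mat n n" unfolding skew_adj_def by simp
  have e: "(ones_vec n :: int vec) \<in> carrier_vec n" unfolding ones_vec_def by simp
  have "map_vec rat_of_int (skew_adj n B ^\<^sub>m k *\<^sub>v ones_vec n) = map_mat of_int (skew_adj n B ^\<^sub>m k) *\<^sub>v map_vec of_int (ones_vec n)"
    by (rule of_int_hom.mult_mat_vec_hom[OF pow_carrier_mat[OF S] e])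
  also have "map_mat of_int (skew_adj n B ^\<^sub>m k) = (map_mat of_int (skew_adj n B)) ^\<^sub>m k"
    by (rule of_int_hom.mat_hom_pow[OF S])
  also have "map_vec rat_of_int (ones_vec n) = ones_vec n" unfolding ones_vec_def by auto
  finally have "map_vec rat_of_int (skew_adj n B ^\<^sub>m k *\<^sub>v ones_vec n) $ i = ((map_mat of_int (skew_adj n B)) ^\<^sub>m k *\<^sub>v ones_vec n) $ i" by simp
  moreover have "dim_vec (skew_adj n B ^\<^sub>m k *\<^sub>v (ones_vec n :: int vec)) = n" using S by simp
  ultimately show ?thesis using assms unfolding walk_mat_def by simp
qed

theorem lemma3p2:
  fixes n p :: nat and A :: "nat \<Rightarrow> nat \<Rightarrow> bool" and Q :: "rat mat"
  assumes "in_G n A"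
    and "Q \<in> Qset n A"
    and "prime p" and "p dvd level n Q"
  shows "\<exists>z :: int vec. z \<in> carrier_vec n \<and> \<not> (\<forall>i<n. int p dvd z $ i) \<and>
           (\<forall>i<n. int p dvd ((walk_mat n A)\<^sup>T *\<^sub>v z) $ i)"
proof -
  from assms(2) obtain B where Qreg: "regular_rat_orth n Q"
    and QSQ: "Q\<^sup>T * map_mat of_int (skew_adj n A) * Q = map_mat of_int (skew_adj n B)"
    unfolding Qset_def by auto
  define SA :: "rat mat" where "SA = map_mat of_int (skew_adj n A)"
  define SB :: "rat mat" where "SB = map_mat of_int (skew_adj n B)"
  define e :: "rat vec" where "e = ones_vec n"
  define Qt where "Qt = Q\<^sup>T"
  have Q: "Q \<in> carrier_mat n n" and QtQ: "Qt * Q = 1\<^sub>m n" and Qe: "Q *\<^sub>v e = e"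
    using Qreg unfolding regular_rat_orth_def Qt_def e_def by auto
  have Qt: "Qt \<in> carrier_mat n n" using Q unfolding Qt_def by simp
  have SAc: "SA \<in> carrier_mat n n" unfolding SA_def skew_adj_def by simp
  have SBc: "SB \<in> carrier_mat n n" unfolding SB_def skew_adj_def by simp
  have ec: "e \<in> carrier_vec n" unfolding e_def ones_vec_def by simp
  have QQt: "Q * Qt = 1\<^sub>m n" by (rule mat_mult_left_right_inverse[OF Qt Q QtQ])
  have QSQ': "Qt * SA * Q = SB" using QSQ unfolding Qt_def SA_def SB_def .
  have Qte: "Qt *\<^sub>v e = e"
  proof -
    have "Qt *\<^sub>v e = Qt *\<^sub>v (Q *\<^sub>v e)" using Qe by simp
    also have "\<dots> = (Qt * Q) *\<^sub>v e" using Qt Q ec by simp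
    finally show ?thesis using QtQ ec by simp
  qed
  have comm: "Qt * SA = SB * Qt"
  proof -
    have "Qt * SA = Qt * SA * (Q * Qt)" using QQt Qt SAc by simp
    also have "\<dots> = (Qt * SA * Q) * Qt" using Qt SAc Q
      by (metis assoc_mult_mat mult_carrier_mat)
    finally show ?thesis using QSQ' by simp
  qed
  have commk: "Qt * SA ^\<^sub>m k = SB ^\<^sub>m k * Qt" for k
  proof (induction k)
    case 0 then show ?case using Qt SAc SBc by simp
  next
    case (Suc k)
    have "Qt * SA ^\<^sub>m Suc k = (Qt * SA ^\<^sub>m k) * SA" using Qt SAc
      by (simp add: assoc_mult_mat[symmetric, of Qt n n "SA ^\<^sub>m k" n SA n])
    also have "\<dots> = SB ^\<^sub>m k * (Qt * SA)" using Suc Qt SAc SBc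
      by (simp add: assoc_mult_mat[of "SB ^\<^sub>m k" n n Qt n SA n])
    also have "\<dots> = SB ^\<^sub>m k * (SB * Qt)" using comm by simp
    also have "\<dots> = SB ^\<^sub>m Suc k * Qt" using Qt SBc
      by (simp add: assoc_mult_mat[symmetric, of "SB ^\<^sub>m k" n n SB n Qt n])
    finally show ?case .
  qed
  have walkQ: "Qt *\<^sub>v (SA ^\<^sub>m k *\<^sub>v e) = SB ^\<^sub>m k *\<^sub>v e" for k
  proof -
    have "Qt *\<^sub>v (SA ^\<^sub>m k *\<^sub>v e) = (Qt * SA ^\<^sub>m k) *\<^sub>v e"
      using assoc_mult_mat_vec[OF Qt pow_carrier_mat[OF SAc, of k] ec] by simp
    also have "\<dots> = (SB ^\<^sub>m k * Qt) *\<^sub>v e" by (simp add: commk)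
    also have "\<dots> = SB ^\<^sub>m k *\<^sub>v (Qt *\<^sub>v e)" using assoc_mult_mat_vec[OF pow_carrier_mat[OF SBc, of k] Qt ec] by simp
    finally show ?thesis using Qte by simp
  qed
  have key: "(\<Sum>i<n. rat_of_int (walk_mat n A $$ (i,k)) * Q $$ (i,j)) = rat_of_int (walk_mat n B $$ (j,k))"
    if "j < n" "k < n" for j k
  proof -
    have "(\<Sum>i<n. rat_of_int (walk_mat n A $$ (i,k)) * Q $$ (i,j)) =
          (\<Sum>i<n. Qt $$ (j,i) * (SA ^\<^sub>m k *\<^sub>v e) $ i)"
      using walk_entry[of _ n k A] that Q unfolding SA_def e_def Qt_def
      by (intro sum.cong) auto
    also have "\<dots> = (Qt *\<^sub>v (SA ^\<^sub>m k *\<^sub>v e)) $ j"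
      using that Qt SAc ec by (simp add: scalar_prod_def lessThan_atLeast0)
    also have "\<dots> = (SB ^\<^sub>m k *\<^sub>v e) $ j" by (simp add: walkQ)
    also have "\<dots> = rat_of_int (walk_mat n B $$ (j,k))"
      using walk_entry[of j n k B] that unfolding SB_def e_def by simp
    finally show ?thesis .
  qed
  define l where "l = level n Q"
  have lprop: "l > 0 \<and> (\<forall>i<n. \<forall>j<n. of_nat l * Q $$ (i,j) \<in> \<int>)"
    unfolding l_def level_def by (rule LeastI_ex[OF level_exists])
  obtain m where lm: "l = p * m" using assms(4) unfolding l_def by auto
  have p1: "p > 1" using assms(3) prime_gt_1_nat by blast
  have mpos: "m > 0" using lprop lm by (cases m) auto
  have mless: "m < l" using lm p1 mpos by simp
  have "\<not> (m > 0 \<and> (\<forall>i<n. \<forall>j<n. of_nat m * Q $$ (i,j) \<in> \<int>))"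
    using not_less_Least[OF mless[unfolded l_def level_def]] unfolding l_def level_def by blast
  then obtain i0 j0 where ij: "i0 < n" "j0 < n" "of_nat m * Q $$ (i0,j0) \<notin> \<int>"
    using mpos by blast
  define z :: "int vec" where "z = vec n (\<lambda>i. \<lfloor>of_nat l * Q $$ (i,j0)\<rfloor>)"
  have zi: "rat_of_int (z $ i) = of_nat l * Q $$ (i,j0)" if "i < n" for i
    using lprop that ij(2) unfolding z_def by (auto elim!: Ints_cases)
  show ?thesis
  proof (intro exI conjI)
    show "z \<in> carrier_vec n" unfolding z_def by simp
    show "\<not> (\<forall>i<n. int p dvd z $ i)"
    proof
      assume "\<forall>i<n. int p dvd z $ i"
      then obtain c where "z $ i0 = int p * c" using ij(1) by blast
      then have "rat_of_int (int p * c) = of_nat p * (of_nat m * Q $$ (i0,j0))"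
        using zi[OF ij(1)] lm by simp
      then have "of_nat m * Q $$ (i0,j0) = rat_of_int c" using p1 by simp
      then show False using ij(3) by simp
    qed
    show "\<forall>k<n. int p dvd ((walk_mat n A)\<^sup>T *\<^sub>v z) $ k"
    proof (intro allI impI)
      fix k assume k: "k < n"
      have W: "walk_mat n A \<in> carrier_mat n n" unfolding walk_mat_def by simp
      have "rat_of_int (((walk_mat n A)\<^sup>T *\<^sub>v z) $ k) = (\<Sum>i<n. rat_of_int (walk_mat n A $$ (i,k)) * rat_of_int (z $ i))"
        using W k unfolding z_def by (simp add: scalar_prod_def lessThan_atLeast0)
      also have "\<dots> = of_nat l * (\<Sum>i<n. rat_of_int (walk_mat n A $$ (i,k)) * Q $$ (i,j0))"
        by (simp add: zi sum_distrib_left algebra_simps)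
      also have "\<dots> = rat_of_int (int l * walk_mat n B $$ (j0,k))"
        using key[OF ij(2) k] by simp
      finally have "((walk_mat n A)\<^sup>T *\<^sub>v z) $ k = int l * walk_mat n B $$ (j0,k)"
        by (simp only: of_int_eq_iff)
      then show "int p dvd ((walk_mat n A)\<^sup>T *\<^sub>v z) $ k" using lm by simp
    qed
  qed
qed

end
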